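(* The energy spectral density $S_\Omega(z)=\sum_{l=-\infty}^{\infty}r(l)z^{-l}$ of the channel uncertainty satisfies $$S_\Omega(z)=\frac12\sum_{i_1,i_2=0}^{\bar\tau}\big(\alpha_{i_1}z^{i_1}-\alpha_{i_2}z^{i_2}\big)\big(\alpha_{i_1}z^{-i_1}-\alpha_{i_2}z^{-i_2}\big)p_{i_1}p_{i_2}.$$
   Context: Fix an integer $\bar\tau\ge1$, let $\mathcal{D}=\{0,\dots,\bar\tau\}$, and fix real weights $\alpha_0,\dots,\alpha_{\bar\tau}$. Let $\{\tau_n\}$ be i.i.d. $\mathcal{D}$-valued random variables with $\Pr\{\tau_n=i\}=p_i$, where $\sum_ip_i=1$. Let $\delta$ be the Kronecker delta. Define $\omega(k,n)=\alpha_i[\delta(\tau_n-i)-p_i]$ if $k=n+i$ with $i\in\mathcal{D}$, and $\omega(k,n)=0$ otherwise. For a fixed index $n$, define the autocorrelation $$r(l)=\mathbb{E}\Big\{\sum_{k=-\infty}^{\infty}\omega(k,n)\omega(k+l,n)\Big\},\qquad l\in\mathbb{Z}.$$ It does not depend on $n$. *)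

theory Defs
  imports "HOL-Probability.Probability"
begin

definition kdelta :: "int \<Rightarrow> real" where
  "kdelta x = (if x = 0 then 1 else 0)"

text \<open>omega(k,n) given the realised value t of tau_n:
  alpha_i [delta(t - i) - p_i] if k = n + i with i in {0..taubar}, else 0.\<close>
definition omega :: "(nat \<Rightarrow> real) \<Rightarrow> (nat \<Rightarrow> real) \<Rightarrow> nat \<Rightarrow> nat \<Rightarrow> int \<Rightarrow> int \<Rightarrow> real" where
  "omega \<alpha> p taubar t k n =
     (if n \<le> k \<and> k - n \<le> int taubar
      then \<alpha> (nat (k - n)) * (kdelta (int t - (k - n)) - p (nat (k - n)))
      else 0)"

definition autocorr :: "(nat \<Rightarrow> real) \<Rightarrow> nat pmf \<Rightarrow> nat \<Rightarrow> int \<Rightarrow> int \<Rightarrow> real" where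
  "autocorr \<alpha> P taubar n l =
     measure_pmf.expectation P
       (\<lambda>t. \<Sum>\<^sub>\<infinity>k\<in>(UNIV::int set).
              omega \<alpha> (pmf P) taubar t k n * omega \<alpha> (pmf P) taubar t (k + l) n)"

definition esd :: "(nat \<Rightarrow> real) \<Rightarrow> nat pmf \<Rightarrow> nat \<Rightarrow> int \<Rightarrow> complex \<Rightarrow> complex" where
  "esd \<alpha> P taubar n z =
     (\<Sum>\<^sub>\<infinity>l\<in>(UNIV::int set). complex_of_real (autocorr \<alpha> P taubar n l) * z powi (- l))"

end

theory Submission
  imports Defs
begin

definition WW :: "(nat \<Rightarrow> real) \<Rightarrow> (nat \<Rightarrow> real) \<Rightarrow> nat \<Rightarrow> nat \<Rightarrow> real" where
  "WW \<alpha> p t i = \<alpha> i * (kdelta (int t - int i) - p i)"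

definition WX :: "(nat \<Rightarrow> real) \<Rightarrow> (nat \<Rightarrow> real) \<Rightarrow> nat \<Rightarrow> nat \<Rightarrow> int \<Rightarrow> real" where
  "WX \<alpha> p T t m = (if 0 \<le> m \<and> m \<le> int T then WW \<alpha> p t (nat m) else 0)"

lemma inner_sum:
  "(\<Sum>\<^sub>\<infinity>k\<in>(UNIV::int set). omega \<alpha> p T t k n * omega \<alpha> p T t (k + l) n)
   = (\<Sum>i\<in>{0..T}. WW \<alpha> p t i * WX \<alpha> p T t (int i + l))"
proof -
  let ?f = "\<lambda>k. omega \<alpha> p T t k n * omega \<alpha> p T t (k + l) n"
  have "infsum ?f UNIV = infsum ?f ((\<lambda>i. n + int i) ` {0..T})"
  proof (rule infsum_cong_neutral)
    fix k assume "k \<in> UNIV - (\<lambda>i. n + int i) ` {0..T}"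
    then have "\<not> (n \<le> k \<and> k - n \<le> int T)"
    proof (intro notI)
      assume a: "n \<le> k \<and> k - n \<le> int T"
      then have "k = n + int (nat (k - n))" "nat (k - n) \<in> {0..T}" by auto
      then have "k \<in> (\<lambda>i. n + int i) ` {0..T}" by blast
      then show False using \<open>k \<in> UNIV - _\<close> by blast
    qed
    then show "?f k = 0" unfolding omega_def by auto
  qed auto
  also have "\<dots> = sum ?f ((\<lambda>i. n + int i) ` {0..T})" by simp
  also have "\<dots> = (\<Sum>i\<in>{0..T}. ?f (n + int i))"
    by (subst sum.reindex) (auto simp: inj_on_def)
  also have "\<dots> = (\<Sum>i\<in>{0..T}. WW \<alpha> p t i * WX \<alpha> p T t (int i + l))"
    by (rule sum.cong) (auto simp: omega_def WW_def WX_def algebra_simps)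
  finally show ?thesis .
qed

lemma autocorr_eq:
  assumes "set_pmf P \<subseteq> {0..T}"
  shows "autocorr \<alpha> P T n l = (\<Sum>t\<in>{0..T}. (\<Sum>i\<in>{0..T}. WW \<alpha> (pmf P) t i * WX \<alpha> (pmf P) T t (int i + l)) * pmf P t)"
  unfolding autocorr_def inner_sum
  by (rule integral_measure_pmf_real) (use assms in auto)

lemma autocorr_zero:
  assumes "set_pmf P \<subseteq> {0..T}" "l \<notin> {- int T..int T}"
  shows "autocorr \<alpha> P T n l = 0"
proof -
  have "WX \<alpha> (pmf P) T t (int i + l) = 0" if "i \<in> {0..T}" for i t
    using that assms(2) by (auto simp: WX_def)
  then show ?thesis by (simp add: autocorr_eq[OF assms(1)])
qed

lemma esd_finite:
  assumes "set_pmf P \<subseteq> {0..T}"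
  shows "esd \<alpha> P T n z = (\<Sum>l\<in>{- int T..int T}. complex_of_real (autocorr \<alpha> P T n l) * z powi (- l))"
  unfolding esd_def
  by (subst infsum_cong_neutral[where T="{- int T..int T}" and g="\<lambda>l. complex_of_real (autocorr \<alpha> P T n l) * z powi (- l)"])
     (use autocorr_zero[OF assms] in auto)

lemma shift_sum:
  fixes z :: complex
  assumes "z \<noteq> 0" "i \<in> {0..T}"
  shows "(\<Sum>l\<in>{- int T..int T}. complex_of_real (WX \<alpha> p T t (int i + l)) * z powi (- l))
     = (\<Sum>j\<in>{0..T}. complex_of_real (WW \<alpha> p t j) * (z ^ i * z powi (- int j)))"
proof -
  have "(\<Sum>j\<in>{0..T}. complex_of_real (WW \<alpha> p t j) * (z ^ i * z powi (- int j)))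
      = (\<Sum>j\<in>{0..T}. (\<lambda>l. complex_of_real (WX \<alpha> p T t (int i + l)) * z powi (- l)) (int j - int i))"
  proof (rule sum.cong)
    fix j assume "j \<in> {0..T}"
    then show "complex_of_real (WW \<alpha> p t j) * (z ^ i * z powi (- int j)) = 
      (\<lambda>l. complex_of_real (WX \<alpha> p T t (int i + l)) * z powi (- l)) (int j - int i)"
      using assms by (auto simp: WX_def power_int_diff power_int_minus field_simps)
  qed simp
  also have "\<dots> = (\<Sum>l\<in>(\<lambda>j. int j - int i) ` {0..T}. complex_of_real (WX \<alpha> p T t (int i + l)) * z powi (- l))"
    by (subst sum.reindex) (auto simp: inj_on_def)
  also have "\<dots> = (\<Sum>l\<in>{- int T..int T}. complex_of_real (WX \<alpha> p T t (int i + l)) * z powi (- l))"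
  proof (rule sum.mono_neutral_left)
    show "(\<lambda>j. int j - int i) ` {0..T} \<subseteq> {- int T..int T}" using assms by auto
    show "\<forall>l\<in>{- int T..int T} - (\<lambda>j. int j - int i) ` {0..T}.
       complex_of_real (WX \<alpha> p T t (int i + l)) * z powi (- l) = 0"
    proof
      fix l assume l: "l \<in> {- int T..int T} - (\<lambda>j. int j - int i) ` {0..T}"
      have "\<not> (0 \<le> int i + l \<and> int i + l \<le> int T)"
      proof
        assume a: "0 \<le> int i + l \<and> int i + l \<le> int T"
        then have "l = int (nat (int i + l)) - int i" "nat (int i + l) \<in> {0..T}" by auto
        then have "l \<in> (\<lambda>j. int j - int i) ` {0..T}" by blast
        then show False using l by blast
      qed
      then show "complex_of_real (WX \<alpha> p T t (int i + l)) * z powi (- l) = 0" unfolding WX_def by auto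
    qed
  qed simp
  finally show ?thesis ..
qed

lemma main_eq:
  fixes \<alpha> :: "nat \<Rightarrow> real" and P :: "nat pmf" and T :: nat and n :: int and z :: complex
  assumes P: "set_pmf P \<subseteq> {0..T}" and z: "z \<noteq> 0"
  defines "c \<equiv> complex_of_real"
  shows "esd \<alpha> P T n z = (\<Sum>t\<in>{0..T}. c (pmf P t) *
     ((\<Sum>i\<in>{0..T}. c (WW \<alpha> (pmf P) t i) * z ^ i) * (\<Sum>j\<in>{0..T}. c (WW \<alpha> (pmf P) t j) * z powi (- int j))))"
proof -
  let ?W = "WW \<alpha> (pmf P)" and ?X = "WX \<alpha> (pmf P) T"
  have "esd \<alpha> P T n z = (\<Sum>l\<in>{- int T..int T}. \<Sum>t\<in>{0..T}. \<Sum>i\<in>{0..T}.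
       c (pmf P t) * (c (?W t i) * (c (?X t (int i + l)) * z powi (- l))))"
    unfolding esd_finite[OF P] autocorr_eq[OF P] c_def
    by (simp add: sum_distrib_left sum_distrib_right mult_ac)
  also have "\<dots> = (\<Sum>t\<in>{0..T}. \<Sum>i\<in>{0..T}. \<Sum>l\<in>{- int T..int T}.
       c (pmf P t) * (c (?W t i) * (c (?X t (int i + l)) * z powi (- l))))"
    by (subst sum.swap) (simp add: sum.swap[of _ "{- int T..int T}"])
  also have "\<dots> = (\<Sum>t\<in>{0..T}. c (pmf P t) * (\<Sum>i\<in>{0..T}. c (?W t i) *
       (\<Sum>l\<in>{- int T..int T}. c (?X t (int i + l)) * z powi (- l))))"
    by (simp add: sum_distrib_left)
  also have "\<dots> = (\<Sum>t\<in>{0..T}. c (pmf P t) * (\<Sum>i\<in>{0..T}. c (?W t i) *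
       (\<Sum>j\<in>{0..T}. c (?W t j) * (z ^ i * z powi (- int j)))))"
    unfolding c_def by (intro sum.cong refl arg_cong2[where f="(*)"]) (simp add: shift_sum[OF z])
  also have "\<dots> = (\<Sum>t\<in>{0..T}. c (pmf P t) *
     ((\<Sum>i\<in>{0..T}. c (?W t i) * z ^ i) * (\<Sum>j\<in>{0..T}. c (?W t j) * z powi (- int j))))"
    unfolding sum_product by (simp add: sum_distrib_left mult_ac)
  finally show ?thesis .
qed

lemma generic_id:
  fixes a b q :: "nat \<Rightarrow> complex"
  assumes "sum q D = 1"
  shows "(\<Sum>t\<in>D. q t * ((a t - sum (\<lambda>i. q i * a i) D) * (b t - sum (\<lambda>i. q i * b i) D)))
    = (1/2) * (\<Sum>i\<in>D. \<Sum>j\<in>D. (a i - a j) * (b i - b j) * q i * q j)"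
proof -
  let ?A = "sum (\<lambda>i. q i * a i) D" and ?B = "sum (\<lambda>i. q i * b i) D" and ?S = "sum (\<lambda>i. q i * a i * b i) D"
  have "(\<Sum>t\<in>D. q t * ((a t - ?A) * (b t - ?B))) =
     (\<Sum>t\<in>D. q t * a t * b t - (q t * a t) * ?B - ?A * (q t * b t) + (?A * ?B) * q t)"
    by (rule sum.cong) (simp_all add: algebra_simps)
  also have "\<dots> = ?S - ?A * ?B - ?A * ?B + ?A * ?B * sum q D"
    by (simp add: sum.distrib sum_subtractf sum_distrib_left[symmetric] sum_distrib_right[symmetric])
  also have "\<dots> = ?S - ?A * ?B" using assms by (simp add: algebra_simps)
  finally have L: "(\<Sum>t\<in>D. q t * ((a t - ?A) * (b t - ?B))) = ?S - ?A * ?B" .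
  have "(\<Sum>i\<in>D. \<Sum>j\<in>D. (a i - a j) * (b i - b j) * q i * q j) =
     (\<Sum>i\<in>D. \<Sum>j\<in>D. (q i * a i * b i) * q j) - (\<Sum>i\<in>D. \<Sum>j\<in>D. (q i * a i) * (q j * b j))
     - (\<Sum>i\<in>D. \<Sum>j\<in>D. (q i * b i) * (q j * a j)) + (\<Sum>i\<in>D. \<Sum>j\<in>D. q i * (q j * a j * b j))"
    by (simp add: algebra_simps sum.distrib sum_subtractf)
  also have "\<dots> = ?S * sum q D - ?A * ?B - ?B * ?A + sum q D * ?S"
    by (simp add: sum_product)
  also have "\<dots> = 2 * (?S - ?A * ?B)" using assms by (simp add: algebra_simps)
  finally show ?thesis using L by simp
qed

lemma WW_sum:
  fixes e :: "nat \<Rightarrow> complex"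
  assumes "t \<in> {0..T}"
  shows "(\<Sum>i\<in>{0..T}. complex_of_real (WW \<alpha> p t i) * e i)
    = complex_of_real (\<alpha> t) * e t - (\<Sum>i\<in>{0..T}. complex_of_real (p i) * (complex_of_real (\<alpha> i) * e i))"
proof -
  have "(\<Sum>i\<in>{0..T}. complex_of_real (WW \<alpha> p t i) * e i)
     = (\<Sum>i\<in>{0..T}. (if t = i then complex_of_real (\<alpha> i) * e i else 0) - complex_of_real (p i) * (complex_of_real (\<alpha> i) * e i))"
    by (rule sum.cong) (auto simp: WW_def kdelta_def algebra_simps)
  also have "\<dots> = complex_of_real (\<alpha> t) * e t - (\<Sum>i\<in>{0..T}. complex_of_real (p i) * (complex_of_real (\<alpha> i) * e i))"
    using assms by (simp add: sum_subtractf)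
  finally show ?thesis .
qed

theorem lemma3p2:
  fixes \<alpha> :: "nat \<Rightarrow> real" and P :: "nat pmf" and taubar :: nat and n :: int and z :: complex
  assumes "taubar \<ge> 1"
    and "set_pmf P \<subseteq> {0..taubar}"
    and "z \<noteq> 0"
  shows "esd \<alpha> P taubar n z =
    (1/2) * (\<Sum>i1\<in>{0..taubar}. \<Sum>i2\<in>{0..taubar}.
       (complex_of_real (\<alpha> i1) * z ^ i1 - complex_of_real (\<alpha> i2) * z ^ i2)
     * (complex_of_real (\<alpha> i1) * z powi (- int i1) - complex_of_real (\<alpha> i2) * z powi (- int i2))
     * complex_of_real (pmf P i1) * complex_of_real (pmf P i2))"
proof -
  let ?q = "\<lambda>i. complex_of_real (pmf P i)"
  let ?a = "\<lambda>i. complex_of_real (\<alpha> i) * z ^ i"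
  let ?b = "\<lambda>i. complex_of_real (\<alpha> i) * z powi (- int i)"
  have q1: "sum ?q {0..taubar} = 1"
    using sum_pmf_eq_1[OF _ assms(2)] by (metis finite_atLeastAtMost of_real_1 of_real_sum)
  have "esd \<alpha> P taubar n z = (\<Sum>t\<in>{0..taubar}. ?q t *
     ((?a t - sum (\<lambda>i. ?q i * ?a i) {0..taubar}) * (?b t - sum (\<lambda>i. ?q i * ?b i) {0..taubar})))"
    unfolding main_eq[OF assms(2,3)]
    by (rule sum.cong) (simp_all add: WW_sum)
  show ?thesis
    unfolding main_eq[OF assms(2,3)] generic_id[OF q1, symmetric]
    by (rule sum.cong) (simp_all add: WW_sum)
qed

end
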